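(* Let the qubit HQMM be defined as follows. For each time $m\ge 0$, the hidden spaces are $\mathcal{H}_m\simeq\mathbb{C}^2$ with computational basis $\{|0\rangle_m,|1\rangle_m\}$ and the output space is $\mathcal{K}_m\simeq\mathbb{C}^2$ with orthonormal basis $\{|e_0\rangle_m,|e_1\rangle_m\}$. Let $U=\exp(-\mathrm{i}\tfrac{\theta}{2}\sigma_x)=\cos(\tfrac{\theta}{2})\mathbb{I}-\mathrm{i}\sin(\tfrac{\theta}{2})\sigma_x$ with $0<|\theta|<\pi$. The hidden transition expectation is $\mathcal{E}_{H;m}(X)=V_{H;m}^{*}XV_{H;m}$ for $X\in\mathcal{B}(\mathcal{H}_m\otimes\mathcal{H}_{m+1})$, with isometry $V_{H;m}|\psi\rangle_m=U|\psi\rangle_m\otimes|0\rangle_{m+1}$; the emission expectation is $\mathcal{E}_{H,O;m}(Y)=V_{H,O;m}^{*}YV_{H,O;m}$ for $Y\in\mathcal{B}(\mathcal{H}_m\otimes\mathcal{K}_m)$, with isometry $V_{H,O;m}|0\rangle_m=|0\rangle_m\otimes|e_0\rangle_m$, $V_{H,O;m}|1\rangle_m=|1\rangle_m\otimes|e_1\rangle_m$. The conventional block maps are $\mathcal{F}^{(m)}_{a_m,b_m}(X)=\mathcal{E}_{H;m}\bigl(\mathcal{E}_{H,O;m}(a_m\otimes b_m)\otimes X\bigr)$ and the causal block maps are $\mathcal{G}^{(m)}_{a_m,b_m}(X)=\mathcal{E}_{H,O;m}\bigl(\mathcal{E}_{H;m}(a_m\otimes X)\otimes b_m\bigr)$,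 for $a_m\in\mathcal{B}(\mathcal{H}_m)$, $b_m\in\mathcal{B}(\mathcal{K}_m)$, $X\in\mathcal{B}(\mathcal{H}_{m+1})$. Let the initial hidden state be $\phi_{H,0}(X)=\operatorname{Tr}(\rho_{H;0}X)$ with $\rho_{H;0}=|0\rangle_0\langle 0|$, and define the conventional and causal HQMM cylinder states by $\varphi_{H,O}\bigl(\bigotimes_{m=0}^n(a_m\otimes b_m)\bigr)=\phi_{H,0}\circ\mathcal{F}^{(0)}_{a_0,b_0}\circ\cdots\circ\mathcal{F}^{(n)}_{a_n,b_n}(\mathbb{I}_{H;n+1})$ and $\psi_{H,O}\bigl(\bigotimes_{m=0}^n(a_m\otimes b_m)\bigr)=\phi_{H,0}\circ\mathcal{G}^{(0)}_{a_0,b_0}\circ\cdots\circ\mathcal{G}^{(n)}_{a_n,b_n}(\mathbb{I}_{H;n+1})$. For the effect sequence \[ (a_0,b_0)=(\mathbb{I}_{\mathcal{H}_0},|e_0\rangle_0\langle e_0|), \qquad (a_m,b_m)=(\mathbb{I}_{\mathcal{H}_m},\mathbb{I}_{\mathcal{K}_m})\;\text{for all }m\ge 1, \] the conventional and causal HQMM cylinder states $\varphi_{H,O}$ and $\psi_{H,O}$ are different. In particular, there exists $n\ge 0$ and an event in the cylinder effect algebra for which the two probability assignments do not coincide.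
   Context: Hidden quantum Markov models (HQMMs) built from completely positive unital transition expectations $\mathcal{E}_{H;m}:\mathcal{B}(\mathcal{H}_m)\otimes\mathcal{B}(\mathcal{H}_{m+1})\to\mathcal{B}(\mathcal{H}_m)$ and emission expectations $\mathcal{E}_{H,O;m}:\mathcal{B}(\mathcal{H}_m)\otimes\mathcal{B}(\mathcal{K}_m)\to\mathcal{B}(\mathcal{H}_m)$, composed either in the conventional (emission–then–transition) order or the causal (transition–then–emission) order; the finite-time functionals extend to states on the quasi-local algebra $\bigotimes_{m\in\mathbb{N}}\mathcal{B}(\mathcal{H}_m)\otimes\mathcal{B}(\mathcal{K}_m)$. *)

theory Defs
  imports "HOL-Analysis.Analysis"
begin

text \<open>All spaces H_m, K_m are copies of C^2, indexed by the numeral type 2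
 (elements 0 and 1 = computational basis |0>,|1>, resp. |e_0>,|e_1>).
 Operators on C^2 are complex^2^2; operators on C^2 (x) C^2 are
 complex^(2*2)^(2*2); the first tensor factor is the first component.\<close>

type_synonym qop = "complex^2^2"
type_synonym qop2 = "complex^(2\<times>2)^(2\<times>2)"

definition adj :: "complex^'n^'m \<Rightarrow> complex^'m^'n" where
  "adj M = (\<chi> i j. cnj (M $ j $ i))"

definition kron :: "complex^'n^'m \<Rightarrow> complex^'q^'p \<Rightarrow> complex^('n\<times>'q)^('m\<times>'p)" where
  "kron A B = (\<chi> r c. A $ fst r $ fst c * B $ snd r $ snd c)"

definition ket :: "2 \<Rightarrow> complex^2" where
  "ket k = axis k 1"

definition outer :: "complex^2 \<Rightarrow> complex^2 \<Rightarrow> qop" where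
  "outer u v = (\<chi> i j. u $ i * cnj (v $ j))"

definition sigma_x :: qop where
  "sigma_x = (\<chi> i j. if i \<noteq> j then 1 else 0)"

definition Uop :: "real \<Rightarrow> qop" where
  "Uop \<theta> = (\<chi> i j. complex_of_real (cos (\<theta>/2)) * (mat 1 :: qop) $ i $ j
                     - \<i> * complex_of_real (sin (\<theta>/2)) * sigma_x $ i $ j)"

definition V_H :: "real \<Rightarrow> complex^2^(2\<times>2)" where
  "V_H \<theta> = (\<chi> r k. Uop \<theta> $ fst r $ k * ket 0 $ snd r)"

definition V_HO :: "complex^2^(2\<times>2)" where
  "V_HO = (\<chi> r k. ket k $ fst r * ket k $ snd r)"

definition E_H :: "real \<Rightarrow> qop2 \<Rightarrow> qop" where
  "E_H \<theta> X = adj (V_H \<theta>) ** X ** V_H \<theta>"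

definition E_HO :: "qop2 \<Rightarrow> qop" where
  "E_HO Y = adj V_HO ** Y ** V_HO"

definition F_blk :: "real \<Rightarrow> qop \<Rightarrow> qop \<Rightarrow> qop \<Rightarrow> qop" where
  "F_blk \<theta> a b X = E_H \<theta> (kron (E_HO (kron a b)) X)"

definition G_blk :: "real \<Rightarrow> qop \<Rightarrow> qop \<Rightarrow> qop \<Rightarrow> qop" where
  "G_blk \<theta> a b X = E_HO (kron (E_H \<theta> (kron a X)) b)"

definition rho0 :: qop where
  "rho0 = outer (ket 0) (ket 0)"

definition phi_H0 :: "qop \<Rightarrow> complex" where
  "phi_H0 X = trace (rho0 ** X)"

definition varphi_HO :: "real \<Rightarrow> (nat \<Rightarrow> qop) \<Rightarrow> (nat \<Rightarrow> qop) \<Rightarrow> nat \<Rightarrow> complex" where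
  "varphi_HO \<theta> a b n = phi_H0 (foldr (\<lambda>m X. F_blk \<theta> (a m) (b m) X) [0..<Suc n] (mat 1))"

definition psi_HO :: "real \<Rightarrow> (nat \<Rightarrow> qop) \<Rightarrow> (nat \<Rightarrow> qop) \<Rightarrow> nat \<Rightarrow> complex" where
  "psi_HO \<theta> a b n = phi_H0 (foldr (\<lambda>m X. G_blk \<theta> (a m) (b m) X) [0..<Suc n] (mat 1))"

definition eff_a :: "nat \<Rightarrow> qop" where
  "eff_a m = mat 1"

definition eff_b :: "nat \<Rightarrow> qop" where
  "eff_b m = (if m = 0 then outer (ket 0) (ket 0) else mat 1)"

end

theory Submission imports Defs begin
lemma U2: "(UNIV::2 set) = {0,1}"
proof -
  have "(2::2) = 0" by simp
  then show ?thesis using UNIV_2 by auto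
qed
lemma sum2: "(\<Sum>i\<in>(UNIV::2 set). f i) = f 0 + f 1" by (simp add: U2)
lemma sum22: "(\<Sum>i\<in>(UNIV::(2\<times>2) set). f i) = f (0,0) + f (0,1) + f (1,0) + f(1,1)"
proof -
  have "(\<Sum>i\<in>(UNIV::(2\<times>2) set). f i) = (\<Sum>x\<in>UNIV. \<Sum>y\<in>UNIV. f (x,y))"
    by (simp add: sum.cartesian_product)
  then show ?thesis by (simp add: sum2 add.assoc)
qed
lemma trace2: "trace (A::complex^2^2) = A$0$0 + A$1$1" by (simp add: trace_def sum2)
lemma phiv: "varphi_HO \<theta> eff_a eff_b 0 = complex_of_real ((cos (\<theta>/2))^2)"
  unfolding varphi_HO_def phi_H0_def
  apply (simp add: trace2 F_blk_def E_H_def E_HO_def matrix_matrix_mult_def sum2 sum22 adj_def kron_def V_H_def V_HO_def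
     eff_a_def eff_b_def rho0_def outer_def ket_def axis_def Uop_def sigma_x_def mat_def)
  by (simp add: power2_eq_square)
lemma psiv: "psi_HO \<theta> eff_a eff_b 0 = 1"
  unfolding psi_HO_def phi_H0_def
  apply (simp add: trace2 G_blk_def E_H_def E_HO_def matrix_matrix_mult_def sum2 sum22 adj_def kron_def V_H_def V_HO_def
     eff_a_def eff_b_def rho0_def outer_def ket_def axis_def Uop_def sigma_x_def mat_def)
  by (metis (no_types, opaque_lifting) cos_squared_eq complex_i_mult_minus diff_minus_eq_add mult.commute mult.left_commute of_real_1 of_real_add of_real_diff of_real_mult power2_eq_square diff_add_cancel)
theorem mainTheorem1:
  fixes \<theta> :: real
  assumes "0 < \<bar>\<theta>\<bar>" and "\<bar>\<theta>\<bar> < pi"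
  shows "\<exists>n. varphi_HO \<theta> eff_a eff_b n \<noteq> psi_HO \<theta> eff_a eff_b n"
proof
  have "sin (\<bar>\<theta>\<bar>/2) > 0" using assms by (intro sin_gt_zero) auto
  hence "sin (\<theta>/2) \<noteq> 0" by (cases "\<theta> \<ge> 0") auto
  hence "(cos (\<theta>/2))^2 \<noteq> 1" by (simp add: cos_squared_eq)
  hence "complex_of_real ((cos (\<theta>/2))^2) \<noteq> 1"
    by (metis of_real_1 of_real_eq_iff)
  thus "varphi_HO \<theta> eff_a eff_b 0 \<noteq> psi_HO \<theta> eff_a eff_b 0" unfolding phiv psiv .
qed
end
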